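(* Let $D$ be an API-domain and $S$ a multiplicatively closed subset of $D$ not containing $0$. Then the localization $D_S$ is an API-domain. If moreover $D$ is quasilocal, then so is $D_S$.
   Context: An API-domain is an integral domain in which for every nonempty subset $\{d_\alpha\}$ of nonzero elements there is a natural number $n$ with the ideal generated by $\{d_\alpha^n\}$ principal. Quasilocal: unique maximal ideal. *)

theory Defs
  imports "HOL-Computational_Algebra.Fraction_Field"
begin

text \<open>The domain D itself is the whole type (R = UNIV); the localization D_S is
  realised as the subring {a/s | a in D, s in S} of the fraction field of D.\<close>

definition ideal_in :: "'a::comm_ring_1 set \<Rightarrow> 'a set \<Rightarrow> bool" where
  "ideal_in R I \<longleftrightarrow> I \<subseteq> R \<and> 0 \<in> I \<and> (\<forall>x\<in>I. \<forall>y\<in>I. x + y \<in> I) \<and>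
     (\<forall>r\<in>R. \<forall>x\<in>I. r * x \<in> I)"

definition ideal_gen_in :: "'a::comm_ring_1 set \<Rightarrow> 'a set \<Rightarrow> 'a set" where
  "ideal_gen_in R X = {(\<Sum>x\<in>F. c x * x) | F c. finite F \<and> F \<subseteq> X \<and> (\<forall>x\<in>F. c x \<in> R)}"

definition principal_in :: "'a::comm_ring_1 set \<Rightarrow> 'a set \<Rightarrow> bool" where
  "principal_in R I \<longleftrightarrow> (\<exists>g\<in>R. I = {r * g | r. r \<in> R})"

definition API_on :: "'a::comm_ring_1 set \<Rightarrow> bool" where
  "API_on R \<longleftrightarrow> (\<forall>X. X \<noteq> {} \<longrightarrow> X \<subseteq> R - {0} \<longrightarrow>
     (\<exists>n::nat. n \<ge> 1 \<and> principal_in R (ideal_gen_in R ((\<lambda>d. d ^ n) ` X))))"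

definition maximal_ideal_in :: "'a::comm_ring_1 set \<Rightarrow> 'a set \<Rightarrow> bool" where
  "maximal_ideal_in R M \<longleftrightarrow> ideal_in R M \<and> M \<noteq> R \<and>
     (\<forall>J. ideal_in R J \<longrightarrow> M \<subseteq> J \<longrightarrow> J \<noteq> R \<longrightarrow> J = M)"

definition quasilocal_on :: "'a::comm_ring_1 set \<Rightarrow> bool" where
  "quasilocal_on R \<longleftrightarrow> (\<exists>!M. maximal_ideal_in R M)"

definition mult_closed :: "'a::comm_ring_1 set \<Rightarrow> bool" where
  "mult_closed S \<longleftrightarrow> 1 \<in> S \<and> (\<forall>a\<in>S. \<forall>b\<in>S. a * b \<in> S)"

definition localization :: "'a::idom set \<Rightarrow> 'a fract set" where
  "localization S = {Fract a s | a s. s \<in> S}"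

end

theory Submission
  imports Defs
begin


lemma gen_sub:
  assumes "0 \<in> J" "\<And>x y. x \<in> J \<Longrightarrow> y \<in> J \<Longrightarrow> x + y \<in> J"
    "\<And>c x. c \<in> R \<Longrightarrow> x \<in> X \<Longrightarrow> c * x \<in> J"
  shows "ideal_gen_in R X \<subseteq> J"
proof
  fix z assume "z \<in> ideal_gen_in R X"
  then obtain F c where z: "z = (\<Sum>x\<in>F. c x * x)" "finite F" "F \<subseteq> X" "\<forall>x\<in>F. c x \<in> R"
    unfolding ideal_gen_in_def by blast
  have "F \<subseteq> X \<longrightarrow> (\<forall>x\<in>F. c x \<in> R) \<longrightarrow> (\<Sum>x\<in>F. c x * x) \<in> J"
    using z(2) by (induction F rule: finite_induct) (auto simp: assms)
  then show "z \<in> J" using z by blast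
qed

lemma gen_mem:
  assumes "x \<in> X" "c \<in> R"
  shows "c * x \<in> ideal_gen_in R X"
  unfolding ideal_gen_in_def
  by (rule CollectI, rule exI[of _ "{x}"], rule exI[of _ "\<lambda>_. c"]) (use assms in auto)

lemma gen_zero: "0 \<in> ideal_gen_in R X"
  unfolding ideal_gen_in_def
  by (rule CollectI, rule exI[of _ "{}"]) auto

lemma gen_add:
  assumes R0: "0 \<in> R" and Radd: "\<And>x y. x \<in> R \<Longrightarrow> y \<in> R \<Longrightarrow> x + y \<in> R"
    and a: "a \<in> ideal_gen_in R X" and b: "b \<in> ideal_gen_in R X"
  shows "a + b \<in> ideal_gen_in R X"
proof -
  obtain F c where F: "a = (\<Sum>x\<in>F. c x * x)" "finite F" "F \<subseteq> X" "\<forall>x\<in>F. c x \<in> R"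
    using a unfolding ideal_gen_in_def by blast
  obtain G d where G: "b = (\<Sum>x\<in>G. d x * x)" "finite G" "G \<subseteq> X" "\<forall>x\<in>G. d x \<in> R"
    using b unfolding ideal_gen_in_def by blast
  define e where "e x = (if x \<in> F then c x else 0) + (if x \<in> G then d x else 0)" for x
  have fin: "finite (F \<union> G)" using F G by auto
  have 1: "(\<Sum>x\<in>F. c x * x) = (\<Sum>x\<in>F \<union> G. (if x \<in> F then c x else 0) * x)"
  proof -
    have "(\<Sum>x\<in>F \<union> G. (if x \<in> F then c x else 0) * x) = (\<Sum>x\<in>F \<union> G. if x \<in> F then c x * x else 0)"
      by (rule sum.cong) auto
    also have "\<dots> = (\<Sum>x\<in>(F \<union> G) \<inter> F. c x * x)" by (rule sum.inter_restrict[OF fin, symmetric])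
    also have "(F \<union> G) \<inter> F = F" by auto
    finally show ?thesis by simp
  qed
  have 2: "(\<Sum>x\<in>G. d x * x) = (\<Sum>x\<in>F \<union> G. (if x \<in> G then d x else 0) * x)"
  proof -
    have "(\<Sum>x\<in>F \<union> G. (if x \<in> G then d x else 0) * x) = (\<Sum>x\<in>F \<union> G. if x \<in> G then d x * x else 0)"
      by (rule sum.cong) auto
    also have "\<dots> = (\<Sum>x\<in>(F \<union> G) \<inter> G. d x * x)" by (rule sum.inter_restrict[OF fin, symmetric])
    also have "(F \<union> G) \<inter> G = G" by auto
    finally show ?thesis by simp
  qed
  have "a + b = (\<Sum>x\<in>F \<union> G. e x * x)"
    unfolding F(1) G(1) 1 2 e_def by (simp add: sum.distrib distrib_right)
  moreover have "\<forall>x\<in>F \<union> G. e x \<in> R" using F G R0 Radd unfolding e_def by auto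
  ultimately show ?thesis unfolding ideal_gen_in_def using fin F G
    by (intro CollectI exI[of _ "F \<union> G"] exI[of _ e]) auto
qed

lemma gen_mult:
  assumes Rmul: "\<And>x y. x \<in> R \<Longrightarrow> y \<in> R \<Longrightarrow> x * y \<in> R"
    and r: "r \<in> R" and a: "a \<in> ideal_gen_in R X"
  shows "r * a \<in> ideal_gen_in R X"
proof -
  obtain F c where F: "a = (\<Sum>x\<in>F. c x * x)" "finite F" "F \<subseteq> X" "\<forall>x\<in>F. c x \<in> R"
    using a unfolding ideal_gen_in_def by blast
  have "r * a = (\<Sum>x\<in>F. (r * c x) * x)" unfolding F(1) by (simp add: sum_distrib_left mult.assoc)
  moreover have "\<forall>x\<in>F. r * c x \<in> R" using F Rmul r by auto
  ultimately show ?thesis unfolding ideal_gen_in_def using F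
    by (intro CollectI exI[of _ F] exI[of _ "\<lambda>x. r * c x"]) auto
qed


lemma power_Fract: "Fract (a::'a::idom) s ^ n = Fract (a ^ n) (s ^ n)"
  by (induction n) (auto simp: One_fract_def)

lemma mc_pow: "mult_closed S \<Longrightarrow> s \<in> S \<Longrightarrow> s ^ n \<in> S"
  by (induction n) (auto simp: mult_closed_def)



lemma ideal_one: "ideal_in R J \<Longrightarrow> 1 \<in> J \<Longrightarrow> J = R"
  unfolding ideal_in_def by (metis mult.right_neutral subsetI subset_antisym)

lemma nonunit_in_max:
  fixes x :: "'a::idom"
  assumes q: "quasilocal_on (UNIV :: 'a set)" and M: "maximal_ideal_in UNIV M"
    and nu: "\<not> (\<exists>w. x * w = 1)"
  shows "x \<in> M"
proof -
  define A where "A = {J :: 'a set. ideal_in UNIV J \<and> x \<in> J \<and> 1 \<notin> J}"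
  define Ix where "Ix = {r * x | r. True}"
  have "ideal_in UNIV Ix"
    unfolding ideal_in_def
  proof (intro conjI ballI)
    show "0 \<in> Ix" unfolding Ix_def by (metis (mono_tags, lifting) mem_Collect_eq mult_zero_left)
    fix p q assume "p \<in> Ix" "q \<in> Ix"
    then obtain r1 r2 where "p = r1 * x" "q = r2 * x" unfolding Ix_def by blast
    then have "p + q = (r1 + r2) * x" by (simp add: algebra_simps)
    then show "p + q \<in> Ix" unfolding Ix_def by blast
  next
    fix r p assume "p \<in> Ix"
    then obtain r1 where "p = r1 * x" unfolding Ix_def by blast
    then have "r * p = (r * r1) * x" by (simp add: algebra_simps)
    then show "r * p \<in> Ix" unfolding Ix_def by blast
  qed auto
  moreover have "x \<in> Ix" unfolding Ix_def by (metis (mono_tags, lifting) mem_Collect_eq mult_1)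
  moreover have "1 \<notin> Ix" using nu unfolding Ix_def by (auto simp: mult.commute)
  ultimately have "Ix \<in> A" unfolding A_def by blast
  then have "A \<noteq> {}" by blast
  moreover have "\<Union>C \<in> A" if C: "C \<noteq> {}" "subset.chain A C" for C
  proof -
    have CA: "C \<subseteq> A" and ch: "\<forall>X\<in>C. \<forall>Y\<in>C. X \<subseteq> Y \<or> Y \<subseteq> X"
      using C(2) by (auto simp: subset_chain_def)
    obtain X0 where X0: "X0 \<in> C" using C(1) by blast
    have idC: "\<And>Z. Z \<in> C \<Longrightarrow> ideal_in UNIV Z \<and> x \<in> Z \<and> 1 \<notin> Z"
      using CA unfolding A_def by blast
    have "ideal_in UNIV (\<Union>C)" unfolding ideal_in_def
    proof (intro conjI ballI)
      show "0 \<in> \<Union>C" using X0 CA by (auto simp: A_def ideal_in_def)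
      fix p q assume "p \<in> \<Union>C" "q \<in> \<Union>C"
      then obtain X Y where XY: "X \<in> C" "Y \<in> C" "p \<in> X" "q \<in> Y" by blast
      show "p + q \<in> \<Union>C"
      proof (cases "X \<subseteq> Y")
        case True
        then have "p + q \<in> Y" using idC[OF XY(2)] XY unfolding ideal_in_def by blast
        then show ?thesis using XY by blast
      next
        case False
        then have "Y \<subseteq> X" using ch XY by blast
        then have "p + q \<in> X" using idC[OF XY(1)] XY unfolding ideal_in_def by blast
        then show ?thesis using XY by blast
      qed
    next
      fix r p assume "p \<in> \<Union>C"
      then obtain X where "X \<in> C" "p \<in> X" by blast
      then have "r * p \<in> X" using idC unfolding ideal_in_def by blast
      then show "r * p \<in> \<Union>C" using \<open>X \<in> C\<close> by blast
    qed auto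
    moreover have "x \<in> \<Union>C" using X0 CA by (auto simp: A_def)
    moreover have "1 \<notin> \<Union>C" using CA by (auto simp: A_def)
    ultimately show ?thesis by (simp add: A_def)
  qed
  ultimately obtain M0 where M0: "M0 \<in> A" "\<forall>X\<in>A. M0 \<subseteq> X \<longrightarrow> X = M0"
    using subset_Zorn_nonempty[of A] by blast
  have "maximal_ideal_in UNIV M0"
    unfolding maximal_ideal_in_def
  proof (intro conjI allI impI)
    show "ideal_in UNIV M0" using M0 by (simp add: A_def)
    show "M0 \<noteq> UNIV" using M0 by (auto simp: A_def)
    fix J assume J: "ideal_in UNIV J" "M0 \<subseteq> J" "J \<noteq> UNIV"
    then have "1 \<notin> J" using ideal_one by blast
    then have "J \<in> A" using J M0 by (auto simp: A_def)
    then show "J = M0" using M0 J by blast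
  qed
  then have "M0 = M" using q M unfolding quasilocal_on_def by blast
  then show ?thesis using M0 by (simp add: A_def)
qed

lemma chain_pow:
  fixes a1 a2 :: "'a::idom"
  assumes api: "API_on (UNIV :: 'a set)" and q: "quasilocal_on (UNIV :: 'a set)"
    and nz: "a1 \<noteq> 0" "a2 \<noteq> 0"
  shows "\<exists>n\<ge>1. a1 ^ n dvd a2 ^ n \<or> a2 ^ n dvd a1 ^ n"
proof -
  from q obtain M where M: "maximal_ideal_in (UNIV :: 'a set) M" unfolding quasilocal_on_def Ex1_def by blast
  have "\<exists>n::nat. n \<ge> 1 \<and> principal_in UNIV (ideal_gen_in UNIV ((\<lambda>d. d ^ n) ` {a1, a2}))"
    by (rule api[unfolded API_on_def, rule_format]) (use nz in auto)
  then obtain n where n: "n \<ge> 1" and "principal_in UNIV (ideal_gen_in UNIV ((\<lambda>d. d ^ n) ` {a1, a2}))"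
    by blast
  then obtain g where g: "ideal_gen_in UNIV {a1 ^ n, a2 ^ n} = {r * g |r. r \<in> UNIV}"
    unfolding principal_in_def by auto
  have "1 * a1 ^ n \<in> ideal_gen_in UNIV {a1 ^ n, a2 ^ n}" by (intro gen_mem) auto
  then obtain r1 where r1: "a1 ^ n = r1 * g" using g by auto
  have "1 * a2 ^ n \<in> ideal_gen_in UNIV {a1 ^ n, a2 ^ n}" by (intro gen_mem) auto
  then obtain r2 where r2: "a2 ^ n = r2 * g" using g by auto
  have gin: "g \<in> ideal_gen_in UNIV {a1 ^ n, a2 ^ n}" using g by force
  have "ideal_gen_in UNIV {a1 ^ n, a2 ^ n} \<subseteq> {u * a1 ^ n + v * a2 ^ n | u v. True}"
  proof (rule gen_sub)
    show "0 \<in> {u * a1 ^ n + v * a2 ^ n | u v. True}"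
      by (rule CollectI, rule exI[of _ 0], rule exI[of _ 0]) simp
    show "x + y \<in> {u * a1 ^ n + v * a2 ^ n | u v. True}"
      if hxy: "x \<in> {u * a1 ^ n + v * a2 ^ n | u v. True}" "y \<in> {u * a1 ^ n + v * a2 ^ n | u v. True}" for x y
    proof -
      obtain u1 v1 u2 v2 where "x = u1 * a1 ^ n + v1 * a2 ^ n" "y = u2 * a1 ^ n + v2 * a2 ^ n"
        using hxy by blast
      then have "x + y = (u1 + u2) * a1 ^ n + (v1 + v2) * a2 ^ n" by (simp add: algebra_simps)
      then show ?thesis by blast
    qed
    show "c * x \<in> {u * a1 ^ n + v * a2 ^ n | u v. True}" if "c \<in> UNIV" "x \<in> {a1 ^ n, a2 ^ n}" for c x
    proof (cases "x = a1 ^ n")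
      case True
      then have "c * x = c * a1 ^ n + 0 * a2 ^ n" by simp
      then show ?thesis by blast
    next
      case False
      then have "c * x = 0 * a1 ^ n + c * a2 ^ n" using that by simp
      then show ?thesis by blast
    qed
  qed
  then obtain u v where uv: "g = u * a1 ^ n + v * a2 ^ n" using gin by blast
  have g0: "g \<noteq> 0" using r1 nz by auto
  have "1 * g = (u * r1 + v * r2) * g" using uv r1 r2 by (simp add: algebra_simps)
  then have one: "u * r1 + v * r2 = 1" using g0 by (metis mult_cancel_right)
  have Mi: "ideal_in UNIV M" "M \<noteq> UNIV" using M by (auto simp: maximal_ideal_in_def)
  show ?thesis
  proof (cases "\<exists>w. (u * r1) * w = 1")
    case True
    then obtain w where w: "u * r1 * w = 1" by blast
    have "a2 ^ n = (r2 * w * u) * a1 ^ n"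
      using r2 r1 w by (metis (no_types, lifting) mult.assoc mult.commute mult_1)
    then show ?thesis using n by (metis dvd_triv_right)
  next
    case F1: False
    show ?thesis
    proof (cases "\<exists>w. (v * r2) * w = 1")
      case True
      then obtain w where w: "v * r2 * w = 1" by blast
      have "a1 ^ n = (r1 * w * v) * a2 ^ n"
        using r2 r1 w by (metis (no_types, lifting) mult.assoc mult.commute mult_1)
      then show ?thesis using n by (metis dvd_triv_right)
    next
      case False
      then have "v * r2 \<in> M" "u * r1 \<in> M" using nonunit_in_max[OF q M] F1 by auto
      then have "1 \<in> M" using one Mi(1) unfolding ideal_in_def by metis
      then show ?thesis using ideal_one[OF Mi(1)] Mi(2) by blast
    qed
  qed
qed



lemma dvd_pow_sum:
  fixes a x y :: "'a::idom"
  assumes "a dvd x ^ n" "a dvd y ^ n"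
  shows "a dvd (x + y) ^ (2 * n)"
proof -
  have "a dvd of_nat (2 * n choose k) * x ^ k * y ^ (2 * n - k)" if "k \<le> 2 * n" for k
  proof (cases "k \<ge> n")
    case True
    then have "x ^ k = x ^ n * x ^ (k - n)" by (metis le_add_diff_inverse power_add)
    then show ?thesis using assms(1) by (simp add: mult.assoc mult.left_commute)
  next
    case False
    then have "y ^ (2 * n - k) = y ^ n * y ^ (2 * n - k - n)"
      by (metis add_diff_cancel_left' diff_le_mono2 le_add_diff_inverse mult_2 nat_le_linear power_add)
    then show ?thesis using assms(2) by simp
  qed
  then show ?thesis unfolding binomial_ring by (intro dvd_sum) auto
qed

context
  fixes S :: "'a::idom set"
  assumes mc: "mult_closed S" and S0: "0 \<notin> S"
begin

lemma S_nz: "s \<in> S \<Longrightarrow> s \<noteq> 0" using S0 by auto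

lemma L_mem: "s \<in> S \<Longrightarrow> Fract a s \<in> localization S"
  unfolding localization_def by blast

lemma L_cases: "x \<in> localization S \<Longrightarrow> (\<And>a s. x = Fract a s \<Longrightarrow> s \<in> S \<Longrightarrow> P) \<Longrightarrow> P"
  unfolding localization_def by blast

lemma L_add: "x \<in> localization S \<Longrightarrow> y \<in> localization S \<Longrightarrow> x + y \<in> localization S"
  by (erule L_cases, erule L_cases) (use mc S_nz in \<open>auto simp: mult_closed_def intro!: L_mem\<close>)

lemma L_mult: "x \<in> localization S \<Longrightarrow> y \<in> localization S \<Longrightarrow> x * y \<in> localization S"
  by (erule L_cases, erule L_cases) (use mc S_nz in \<open>auto simp: mult_closed_def intro!: L_mem\<close>)

lemma L_0: "0 \<in> localization S"
  using L_mem[of 1 0] mc by (simp add: mult_closed_def Zero_fract_def)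

lemma L_1: "1 \<in> localization S"
  using L_mem[of 1 1] mc by (simp add: mult_closed_def One_fract_def)

lemma L_unit: "s \<in> S \<Longrightarrow> (\<exists>w\<in>localization S. Fract a s * w = 1) \<longleftrightarrow> (\<exists>t\<in>S. a dvd t)"
proof
  assume s: "s \<in> S" and "\<exists>w\<in>localization S. Fract a s * w = 1"
  then obtain b t where t: "t \<in> S" "Fract a s * Fract b t = 1" by (auto elim: L_cases)
  then have "a * b = s * t" using s S_nz by (simp add: One_fract_def eq_fract)
  moreover have "s * t \<in> S" using s t mc by (auto simp: mult_closed_def)
  ultimately show "\<exists>t\<in>S. a dvd t" by (metis dvd_triv_left)
next
  assume s: "s \<in> S" and "\<exists>t\<in>S. a dvd t"
  then obtain t c where t: "t \<in> S" "t = a * c" by blast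
  have "t \<noteq> 0" "s \<noteq> 0" using S_nz[OF t(1)] S_nz[OF s] by simp_all
  then have "Fract a s * Fract (c * s) t = 1" using t(2) by (simp add: One_fract_def eq_fract ac_simps)
  then show "\<exists>w\<in>localization S. Fract a s * w = 1" using t L_mem by blast
qed


lemma API_L:
  assumes api: "API_on (UNIV :: 'a set)"
  shows "API_on (localization S)"
  unfolding API_on_def
proof (intro allI impI)
  fix X :: "'a fract set"
  assume Xne: "X \<noteq> {}" and XL: "X \<subseteq> localization S - {0}"
  define Y where "Y = {a. \<exists>s\<in>S. Fract a s \<in> X}"
  have Y0: "Y \<subseteq> UNIV - {0}"
  proof
    fix a assume "a \<in> Y"
    then obtain s where "Fract a s \<in> X" by (auto simp: Y_def)
    then have "Fract a s \<noteq> 0" using XL by auto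
    then have "a \<noteq> 0" by (auto simp: Zero_fract_def eq_fract(3))
    then show "a \<in> UNIV - {0}" by simp
  qed
  obtain x0 where x0: "x0 \<in> X" using Xne by auto
  then have "x0 \<in> localization S" using XL by auto
  then obtain a0 s0 where "x0 = Fract a0 s0" "s0 \<in> S" by (rule L_cases)
  then have "a0 \<in> Y" using x0 by (auto simp: Y_def)
  then have "Y \<noteq> {}" by auto
  then have "\<exists>n::nat. n \<ge> 1 \<and> principal_in UNIV (ideal_gen_in UNIV ((\<lambda>d. d ^ n) ` Y))"
    using api Y0 unfolding API_on_def by simp
  then obtain n where n: "n \<ge> 1" and "principal_in UNIV (ideal_gen_in UNIV ((\<lambda>d. d ^ n) ` Y))"
    by blast
  then obtain g where g: "ideal_gen_in UNIV ((\<lambda>d. d ^ n) ` Y) = {r * g |r. r \<in> UNIV}"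
    unfolding principal_in_def by blast
  let ?L = "localization S"
  let ?J = "{r * Fract g 1 |r. r \<in> ?L}"
  have "ideal_gen_in ?L ((\<lambda>d. d ^ n) ` X) = ?J"
  proof
    show "ideal_gen_in ?L ((\<lambda>d. d ^ n) ` X) \<subseteq> ?J"
    proof (rule gen_sub)
      show "0 \<in> ?J" using L_0 by (metis (mono_tags, lifting) mem_Collect_eq mult_zero_left)
      show "x + y \<in> ?J" if hxy: "x \<in> ?J" "y \<in> ?J" for x y
      proof -
        obtain r1 r2 where "r1 \<in> ?L" "r2 \<in> ?L" "x = r1 * Fract g 1" "y = r2 * Fract g 1"
          using hxy by blast
        then have "r1 + r2 \<in> ?L" "x + y = (r1 + r2) * Fract g 1"
          using L_add by (auto simp: algebra_simps)
        then show ?thesis by blast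
      qed
      show "c * x \<in> ?J" if c: "c \<in> ?L" and x: "x \<in> (\<lambda>d. d ^ n) ` X" for c x
      proof -
        obtain y where y: "y \<in> X" "x = y ^ n" using x by auto
        then have "y \<in> localization S" using XL by auto
        then obtain a s where "y = Fract a s" "s \<in> S" by (rule L_cases)
        then have as: "s \<in> S" "Fract a s \<in> X" "x = Fract a s ^ n" using y by auto
        have "a \<in> Y" using as by (auto simp: Y_def)
        then have "1 * a ^ n \<in> ideal_gen_in UNIV ((\<lambda>d. d ^ n) ` Y)" by (intro gen_mem) auto
        then obtain r where r: "a ^ n = r * g" using g by auto
        have "s ^ n \<noteq> 0" using S_nz[OF mc_pow[OF mc as(1)]] .
        then have "x = Fract r (s ^ n) * Fract g 1"
          using as(3) r by (simp add: power_Fract)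
        then have "c * x = (c * Fract r (s ^ n)) * Fract g 1" by (simp add: mult.assoc)
        moreover have "c * Fract r (s ^ n) \<in> ?L" using c L_mult L_mem mc_pow[OF mc as(1)] by blast
        ultimately show ?thesis by blast
      qed
    qed
  next
    have "g \<in> {y. Fract y 1 \<in> ideal_gen_in ?L ((\<lambda>d. d ^ n) ` X)}"
    proof (rule subsetD[OF gen_sub])
      show "g \<in> ideal_gen_in UNIV ((\<lambda>d. d ^ n) ` Y)" using g by force
      show "0 \<in> {y. Fract y 1 \<in> ideal_gen_in ?L ((\<lambda>d. d ^ n) ` X)}"
        using gen_zero by (simp add: Zero_fract_def[symmetric])
      show "x + y \<in> {y. Fract y 1 \<in> ideal_gen_in ?L ((\<lambda>d. d ^ n) ` X)}"
        if "x \<in> {y. Fract y 1 \<in> ideal_gen_in ?L ((\<lambda>d. d ^ n) ` X)}"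
           "y \<in> {y. Fract y 1 \<in> ideal_gen_in ?L ((\<lambda>d. d ^ n) ` X)}" for x y
        using gen_add[OF L_0 L_add, of "Fract x 1" _ "Fract y 1"] that by simp
      show "c * x \<in> {y. Fract y 1 \<in> ideal_gen_in ?L ((\<lambda>d. d ^ n) ` X)}"
        if hcx: "c \<in> UNIV" "x \<in> (\<lambda>d. d ^ n) ` Y" for c x
      proof -
        obtain a s where as: "s \<in> S" "Fract a s \<in> X" "x = a ^ n" using hcx by (auto simp: Y_def)
        have sn: "s ^ n \<in> S" using mc_pow[OF mc as(1)] .
        have "s ^ n \<noteq> 0" using S_nz[OF sn] .
        then have "Fract (c * x) 1 = (Fract c 1 * Fract (s ^ n) 1) * (Fract a s) ^ n"
          using as(3) by (simp add: power_Fract eq_fract)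
        moreover have "Fract c 1 * Fract (s ^ n) 1 \<in> ?L"
          using L_mult L_mem mc by (auto simp: mult_closed_def)
        ultimately show ?thesis using as by (auto intro!: gen_mem)
      qed
    qed
    then have gi: "Fract g 1 \<in> ideal_gen_in ?L ((\<lambda>d. d ^ n) ` X)" by simp
    show "?J \<subseteq> ideal_gen_in ?L ((\<lambda>d. d ^ n) ` X)"
      using gen_mult[OF L_mult _ gi] by blast
  qed
  moreover have "Fract g 1 \<in> ?L" using L_mem mc by (auto simp: mult_closed_def)
  ultimately show "\<exists>n\<ge>1. principal_in ?L (ideal_gen_in ?L ((\<lambda>d. d ^ n) ` X))"
    using n unfolding principal_in_def by blast
qed



lemma key_H:
  fixes a c x y :: 'a
  assumes n: "n \<ge> 1" and ac: "a ^ n dvd c ^ n" and na: "\<forall>t\<in>S. \<not> a dvd t"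
  shows "\<forall>t\<in>S. \<not> (a * x + c * y) dvd t"
proof (intro ballI notI)
  fix t assume t: "t \<in> S" and bt: "(a * x + c * y) dvd t"
  have "a dvd a ^ n" using n by (simp add: dvd_power)
  then have 1: "a dvd (a * x) ^ n" by (simp add: power_mult_distrib)
  have "a dvd c ^ n" using \<open>a dvd a ^ n\<close> ac dvd_trans by blast
  then have 2: "a dvd (c * y) ^ n" by (simp add: power_mult_distrib)
  have "a dvd (a * x + c * y) ^ (2 * n)" using dvd_pow_sum[OF 1 2] .
  moreover have "(a * x + c * y) ^ (2 * n) dvd t ^ (2 * n)" using bt by (rule dvd_power_same)
  ultimately have "a dvd t ^ (2 * n)" by (rule dvd_trans)
  moreover have "t ^ (2 * n) \<in> S" using mc_pow[OF mc t] .
  ultimately show False using na by blast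
qed

lemma key_add:
  assumes api: "API_on (UNIV :: 'a set)" and q: "quasilocal_on (UNIV :: 'a set)"
    and n1: "\<forall>t\<in>S. \<not> a1 dvd t" and n2: "\<forall>t\<in>S. \<not> a2 dvd t"
  shows "\<forall>t\<in>S. \<not> (a1 * s2 + a2 * s1) dvd t"
proof (cases "a1 = 0 \<or> a2 = 0")
  case True
  then show ?thesis
  proof
    assume "a1 = 0"
    then show ?thesis using n2 by (auto intro: dvd_mult_left)
  next
    assume "a2 = 0"
    then show ?thesis using n1 by (auto intro: dvd_mult_left)
  qed
next
  case False
  then obtain n where n: "n \<ge> 1" and d: "a1 ^ n dvd a2 ^ n \<or> a2 ^ n dvd a1 ^ n"
    using chain_pow[OF api q] by blast
  from d show ?thesis
  proof
    assume "a1 ^ n dvd a2 ^ n"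
    then show ?thesis using key_H[OF n _ n1] by blast
  next
    assume "a2 ^ n dvd a1 ^ n"
    then show ?thesis using key_H[OF n _ n2, of a1 s1 s2] by (simp add: add.commute)
  qed
qed



lemma proper_sub_N:
  assumes J: "ideal_in (localization S) J" "J \<noteq> localization S"
  shows "J \<subseteq> {z \<in> localization S. \<not> (\<exists>w\<in>localization S. z * w = 1)}"
proof
  fix z assume z: "z \<in> J"
  have zL: "z \<in> localization S" using z J(1) unfolding ideal_in_def by blast
  show "z \<in> {z \<in> localization S. \<not> (\<exists>w\<in>localization S. z * w = 1)}"
  proof (rule ccontr)
    assume "z \<notin> {z \<in> localization S. \<not> (\<exists>w\<in>localization S. z * w = 1)}"
    then obtain w where w: "w \<in> localization S" "z * w = 1" using zL by blast
    then have "w * z \<in> J" using J(1) z unfolding ideal_in_def by blast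
    then have "1 \<in> J" using w by (simp add: mult.commute)
    then show False using ideal_one[OF J(1)] J(2) by blast
  qed
qed

lemma quasi_L:
  assumes api: "API_on (UNIV :: 'a set)" and q: "quasilocal_on (UNIV :: 'a set)"
  shows "quasilocal_on (localization S)"
proof -
  let ?L = "localization S"
  define N where "N = {z \<in> ?L. \<not> (\<exists>w\<in>?L. z * w = 1)}"
  have NL: "N \<noteq> ?L" using L_1 unfolding N_def by force
  have Ni: "ideal_in ?L N"
    unfolding ideal_in_def
  proof (intro conjI ballI)
    show "N \<subseteq> ?L" unfolding N_def by blast
    show "0 \<in> N" using L_0 unfolding N_def by simp
  next
    fix x y assume x: "x \<in> N" and y: "y \<in> N"
    then have "x \<in> ?L" "y \<in> ?L" unfolding N_def by auto
    then obtain a1 s1 a2 s2 where r: "x = Fract a1 s1" "s1 \<in> S" "y = Fract a2 s2" "s2 \<in> S"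
      by (meson L_cases)
    have n1: "\<forall>t\<in>S. \<not> a1 dvd t" using L_unit[OF r(2), of a1] x r unfolding N_def by blast
    have n2: "\<forall>t\<in>S. \<not> a2 dvd t" using L_unit[OF r(4), of a2] y r unfolding N_def by blast
    have "x + y = Fract (a1 * s2 + a2 * s1) (s1 * s2)" using r S_nz by simp
    moreover have s12: "s1 * s2 \<in> S" using r mc by (auto simp: mult_closed_def)
    moreover have "\<forall>t\<in>S. \<not> (a1 * s2 + a2 * s1) dvd t" using key_add[OF api q n1 n2] .
    ultimately show "x + y \<in> N"
      using L_unit[OF s12, of "a1 * s2 + a2 * s1"] L_mem[OF s12] unfolding N_def by auto
  next
    fix r x assume r: "r \<in> ?L" and x: "x \<in> N"
    have "r * x \<in> ?L" using r x L_mult unfolding N_def by blast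
    moreover have "\<not> (\<exists>w\<in>?L. r * x * w = 1)"
    proof
      assume "\<exists>w\<in>?L. r * x * w = 1"
      then obtain w where "w \<in> ?L" "x * (r * w) = 1" by (auto simp: ac_simps)
      moreover have "r * w \<in> ?L" using r \<open>w \<in> ?L\<close> L_mult by blast
      ultimately show False using x unfolding N_def by blast
    qed
    ultimately show "r * x \<in> N" unfolding N_def by blast
  qed
  have NM: "maximal_ideal_in ?L N"
    unfolding maximal_ideal_in_def
  proof (intro conjI allI impI)
    show "ideal_in ?L N" by (fact Ni)
    show "N \<noteq> ?L" by (fact NL)
    fix J assume "ideal_in ?L J" "N \<subseteq> J" "J \<noteq> ?L"
    then show "J = N" using proper_sub_N[of J] unfolding N_def by blast
  qed
  have "M = N" if M: "maximal_ideal_in ?L M" for M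
  proof -
    have "ideal_in ?L M" "M \<noteq> ?L" using M by (auto simp: maximal_ideal_in_def)
    then have "M \<subseteq> N" using proper_sub_N unfolding N_def by blast
    then show "M = N" using M Ni NL unfolding maximal_ideal_in_def by blast
  qed
  then show ?thesis using NM unfolding quasilocal_on_def by blast
qed


end

theorem theorem4:
  fixes S :: "'a::idom set"
  assumes "API_on (UNIV :: 'a set)"
    and "mult_closed S" and "0 \<notin> S"
  shows "API_on (localization S) \<and>
         (quasilocal_on (UNIV :: 'a set) \<longrightarrow> quasilocal_on (localization S))"
  using API_L[OF assms(2,3,1)] quasi_L[OF assms(2,3,1)] by blast


end
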